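(* Let $(A_n)_{n\ge0}$ be an Appell sequence, i.e. $A_0=1$ and $A_n'=nA_{n-1}$ for $n\ge1$, so that $A_n(x)=\sum_{j=0}^n\binom nj z_jx^{n-j}$ with $z_0=1$ and $z_j=A_j(0)$. For any partition $\lambda$ of size $n$, $$A_\lambda(x)=x^n+\binom n1z_1x^{n-1}+\Big(c(\lambda)(z_2-z_1^2)+\binom n2 z_1^2\Big)x^{n-2}+O(x^{n-3}),$$ i.e. the coefficients of $x^n$, $x^{n-1}$, $x^{n-2}$ in $A_\lambda$ are $1$, $nz_1$ and $c(\lambda)(z_2-z_1^2)+\binom n2z_1^2$ respectively.
   Context: For a partition $\lambda=(\lambda_1\ge\dots\ge\lambda_{\ell(\lambda)}>0)$ with degree vector $n_i=\lambda_i+\ell(\lambda)-i$, the Wronskian Appell polynomial is $A_\lambda=\mathrm{Wr}[A_{n_1},\dots,A_{n_{\ell(\lambda)}}]/\prod_{i<j}(n_j-n_i)$ ($A_\emptyset=1$). The content sum is $c(\lambda)=\sum_{(i,j)\in\lambda}(j-i)$, summed over the boxes $(i,j)$, $1\le i\le\ell(\lambda)$, $1\le j\le\lambda_i$, of the Young diagram. *)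

theory Defs
  imports "HOL-Computational_Algebra.Polynomial" "Jordan_Normal_Form.Determinant"
begin

definition appell :: "(nat \<Rightarrow> 'a::field_char_0 poly) \<Rightarrow> bool" where
  "appell A \<longleftrightarrow> A 0 = 1 \<and> (\<forall>n\<ge>1. pderiv (A n) = smult (of_nat n) (A (n - 1)))"

definition is_partition :: "nat list \<Rightarrow> bool" where
  "is_partition lam \<longleftrightarrow> sorted_wrt (\<ge>) lam \<and> (\<forall>x\<in>set lam. 0 < x)"

text \<open>Degree vector, 0-indexed: n_i = lambda_i + l - 1 - i  (i = 0..l-1),
  i.e. lambda_{i+1} + l - (i+1) in 1-indexed notation.\<close>
definition degvec :: "nat list \<Rightarrow> nat \<Rightarrow> nat" where
  "degvec lam i = lam ! i + length lam - 1 - i"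

definition wronskian :: "nat \<Rightarrow> (nat \<Rightarrow> 'a::idom poly) \<Rightarrow> 'a poly" where
  "wronskian l f = det (mat l l (\<lambda>(i, j). (pderiv ^^ i) (f j)))"

definition wronskian_appell ::
  "(nat \<Rightarrow> 'a::field_char_0 poly) \<Rightarrow> nat list \<Rightarrow> 'a poly" where
  "wronskian_appell A lam =
     (let l = length lam; n = degvec lam in
      smult (inverse (\<Prod>j<l. \<Prod>i<j. of_int (int (n j) - int (n i))))
            (wronskian l (\<lambda>j. A (n j))))"

text \<open>Content sum: sum over boxes (i,j) of j - i (same value with 0-indexing).\<close>
definition content :: "nat list \<Rightarrow> int" where
  "content lam = (\<Sum>i<length lam. \<Sum>j<lam ! i. int j - int i)"

end

theory Submission
  imports Defs
begin


lemma choose2_field: "(of_nat (n choose 2) :: 'a::field_char_0) = of_nat n * (of_nat n - 1) / 2"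
proof (induction n)
  case 0 then show ?case by simp
next
  case (Suc n)
  have "Suc n choose 2 = n + (n choose 2)"
    by (simp add: numeral_2_eq_2)
  then show ?case using Suc by (simp add: field_simps)
qed

lemma appell_coeff:
  assumes "appell A"
  shows "coeff (A m) k = (if k \<le> m then of_nat (m choose k) * poly (A (m - k)) 0 else 0)"
proof (induction m arbitrary: k)
  case 0
  have "A 0 = 1" using assms by (simp add: appell_def)
  then show ?case by (cases k) auto
next
  case (Suc m)
  show ?case
  proof (cases k)
    case 0 then show ?thesis by (simp add: poly_0_coeff_0)
  next
    case (Suc k')
    have d: "pderiv (A (Suc m)) = smult (of_nat (Suc m)) (A m)"
      using assms by (simp add: appell_def)
    have "coeff (pderiv (A (Suc m))) k' = of_nat (Suc k') * coeff (A (Suc m)) (Suc k')"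
      by (simp add: coeff_pderiv)
    then have e: "coeff (A (Suc m)) (Suc k') = of_nat (Suc m) * coeff (A m) k' / of_nat (Suc k')"
      unfolding d coeff_smult
      by (metis (no_types, lifting) nonzero_mult_div_cancel_left of_nat_eq_0_iff nat.simps(3))
    show ?thesis
    proof (cases "k' \<le> m")
      case True
      have "of_nat (Suc m) * of_nat (m choose k') = (of_nat (Suc k') * of_nat (Suc m choose Suc k') :: 'a)"
      proof -
        have "Suc m * (m choose k') = Suc k' * (Suc m choose Suc k')"
          using Suc_times_binomial_eq[of m k'] by (simp only: mult.commute)
        then show ?thesis by (metis of_nat_mult)
      qed
      then have h: "of_nat (Suc m) * of_nat (m choose k') = (of_nat (Suc k') * of_nat (Suc m choose Suc k') :: 'a)" .
      have nz: "(of_nat (Suc k') :: 'a) \<noteq> 0" by (simp only: of_nat_eq_0_iff)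
      have "coeff (A (Suc m)) k = of_nat (Suc m) * (of_nat (m choose k') * poly (A (m - k')) 0) / of_nat (Suc k')"
        using True unfolding e Suc Suc.IH by simp
      also have "\<dots> = (of_nat (Suc m) * of_nat (m choose k')) * poly (A (m - k')) 0 / of_nat (Suc k')"
        by (simp only: mult.assoc)
      also have "\<dots> = of_nat (Suc k') * (of_nat (Suc m choose Suc k') * poly (A (m - k')) 0) / of_nat (Suc k')"
        unfolding h by (simp only: mult.assoc)
      also have "\<dots> = of_nat (Suc m choose Suc k') * poly (A (m - k')) 0"
        using nz by (rule nonzero_mult_div_cancel_left)
      finally show ?thesis using True Suc by simp
    next
      case False
      then show ?thesis unfolding e Suc Suc.IH by simp
    qed
  qed
qed

lemma appell_lead:
  assumes "appell A"
  shows "coeff (A m) m = 1" "degree (A m) = m"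
proof -
  have A0: "A 0 = 1" using assms by (simp add: appell_def)
  show c: "coeff (A m) m = 1" using appell_coeff[OF assms, of m m] A0 by simp
  have "degree (A m) \<le> m"
    by (rule degree_le) (simp add: appell_coeff[OF assms])
  moreover have "m \<le> degree (A m)" using c by (intro le_degree) simp
  ultimately show "degree (A m) = m" by simp
qed

lemma appell_reflect:
  assumes "appell A"
  shows "coeff (reflect_poly (A m)) k = of_nat (m choose k) * poly (A k) 0"
proof (cases "k \<le> m")
  case True
  then show ?thesis
    by (simp add: coeff_reflect_poly appell_lead[OF assms] appell_coeff[OF assms]
        binomial_symmetric[symmetric])
next
  case False
  then show ?thesis by (simp add: coeff_reflect_poly appell_lead[OF assms])
qed



definition h2 :: "nat \<Rightarrow> 'a::field_char_0" where "h2 m = of_nat m * (of_nat m - 1) / 2"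

lemma coeff_mult_1: "coeff (p * q) 1 = coeff p 0 * coeff q 1 + coeff p 1 * coeff q 0"
  by (simp add: coeff_mult)

lemma coeff_mult_2: "coeff (p * q) 2 = coeff p 0 * coeff q 2 + coeff p 1 * coeff q 1 + coeff p 2 * coeff q 0"
  by (simp add: coeff_mult numeral_2_eq_2 atMost_Suc algebra_simps)

lemma prod_reflect_coeffs:
  assumes "appell A" and "finite I"
  shows "coeff (\<Prod>i\<in>I. reflect_poly (A (m i))) 0 = 1
    \<and> coeff (\<Prod>i\<in>I. reflect_poly (A (m i))) 1 = of_nat (sum m I) * poly (A 1) 0
    \<and> coeff (\<Prod>i\<in>I. reflect_poly (A (m i))) 2 =
        poly (A 2) 0 * (\<Sum>i\<in>I. h2 (m i)) + (poly (A 1) 0)^2 * (h2 (sum m I) - (\<Sum>i\<in>I. h2 (m i)))"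
  using assms(2)
proof (induction I rule: finite_induct)
  case empty
  then show ?case by (simp add: h2_def)
next
  case (insert a F)
  have A0: "A 0 = 1" using assms(1) by (simp add: appell_def)
  have r0: "coeff (reflect_poly (A (m a))) 0 = 1"
    by (simp add: appell_lead[OF assms(1)])
  have r1: "coeff (reflect_poly (A (m a))) 1 = of_nat (m a) * poly (A 1) 0"
    by (simp add: appell_reflect[OF assms(1)])
  have r2: "coeff (reflect_poly (A (m a))) 2 = h2 (m a) * poly (A 2) 0"
    by (simp add: appell_reflect[OF assms(1)] choose2_field h2_def)
  have hs: "h2 (m a + sum m F) = (h2 (m a) + of_nat (m a) * of_nat (sum m F) + h2 (sum m F) :: 'a)"
    unfolding h2_def of_nat_add by (simp add: field_simps)
  define p where "p = reflect_poly (A (m a))"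
  define Q where "Q = (\<Prod>i\<in>F. reflect_poly (A (m i)))"
  define z1 where "z1 = poly (A 1) 0"
  define z2 where "z2 = poly (A 2) 0"
  define T where "T = (\<Sum>i\<in>F. h2 (m i) :: 'a)"
  have P: "(\<Prod>i\<in>insert a F. reflect_poly (A (m i))) = p * Q"
    using insert by (simp add: p_def Q_def)
  have S: "sum m (insert a F) = m a + sum m F" using insert by simp
  have TT: "(\<Sum>i\<in>insert a F. h2 (m i)) = h2 (m a) + T" using insert by (simp add: T_def)
  have q0: "coeff Q 0 = 1" and q1: "coeff Q 1 = of_nat (sum m F) * z1"
    and q2: "coeff Q 2 = z2 * T + z1^2 * (h2 (sum m F) - T)"
    using insert.IH unfolding Q_def z1_def z2_def T_def by auto
  have p0: "coeff p 0 = 1" and p1: "coeff p 1 = of_nat (m a) * z1" and p2: "coeff p 2 = h2 (m a) * z2"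
    using r0 r1 r2 unfolding p_def z1_def z2_def by auto
  have c0: "coeff (p * Q) 0 = 1" by (simp add: coeff_mult_0 p0 q0)
  have c1: "coeff (p * Q) 1 = of_nat (m a + sum m F) * z1"
    unfolding coeff_mult_1 p0 p1 q0 q1 by (simp add: algebra_simps)
  have c2: "coeff (p * Q) 2 = z2 * (h2 (m a) + T) + z1^2 * (h2 (m a + sum m F) - (h2 (m a) + T))"
    unfolding coeff_mult_2 p0 p1 p2 q0 q1 q2 hs by (simp add: algebra_simps power2_eq_square)
  show ?case unfolding P S TT using c0 c1 c2 by (simp add: z1_def z2_def)
qed

lemma appell_nonzero: "appell A \<Longrightarrow> A m \<noteq> 0"
  using appell_lead(1)[of A m] by auto

lemma prod_appell_coeffs:
  assumes "appell A" and "finite I" and "k \<le> sum m I"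
  shows "coeff (\<Prod>i\<in>I. A (m i)) (sum m I - k) = coeff (\<Prod>i\<in>I. reflect_poly (A (m i))) k"
proof -
  have d: "degree (\<Prod>i\<in>I. A (m i)) = sum m I"
    by (subst degree_prod_eq_sum_degree) (auto simp: appell_nonzero[OF assms(1)] appell_lead[OF assms(1)])
  show ?thesis
    using assms(3) by (simp add: reflect_poly_prod[symmetric] coeff_reflect_poly d)
qed

definition ff :: "nat \<Rightarrow> 'a::field_char_0 \<Rightarrow> 'a" where
  "ff i x = (\<Prod>t<i. x - of_nat t)"

lemma ff_Suc: "ff (Suc i) x = ff i x * (x - of_nat i)"
  by (simp add: ff_def)

lemma appell_pderiv_pow:
  assumes "appell A"
  shows "(pderiv ^^ i) (A m) = smult (ff i (of_nat m)) (A (m - i))"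
proof (induction i)
  case 0 then show ?case by (simp add: ff_def)
next
  case (Suc i)
  have A0: "A 0 = 1" using assms by (simp add: appell_def)
  have D: "\<forall>n\<ge>1. pderiv (A n) = smult (of_nat n) (A (n - 1))" using assms by (simp add: appell_def)
  show ?case
  proof (cases "i < m")
    case True
    have "pderiv (A (m - i)) = smult (of_nat (m - i)) (A (m - i - 1))" using True D by simp
    then show ?thesis using Suc True by (simp add: pderiv_smult ff_Suc of_nat_diff algebra_simps)
  next
    case False
    then have "m - i = 0" by simp
    moreover have "ff (Suc i) (of_nat m :: 'a) = 0"
      unfolding ff_def using False by (intro prod_zero) (auto intro!: bexI[of _ m])
    ultimately show ?thesis using Suc A0 by simp
  qed
qed


definition newt :: "(nat \<Rightarrow> 'a::field) \<Rightarrow> nat \<Rightarrow> 'a poly" where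
  "newt x k = (\<Prod>t<k. [:- x t, 1:])"

lemma newt_deg: "degree (newt x k) = k" "coeff (newt x k) k = 1"
proof -
  have d: "degree (newt x k) = k"
    unfolding newt_def by (subst degree_prod_eq_sum_degree) auto
  show "degree (newt x k) = k" by (fact d)
  have "lead_coeff (newt x k) = 1" unfolding newt_def lead_coeff_prod by simp
  then show "coeff (newt x k) k = 1" using d by simp
qed

lemma newt_poly: "poly (newt x k) y = (\<Prod>t<k. y - x t)"
  unfolding newt_def by (simp add: poly_prod)

lemma newt_span:
  fixes x :: "nat \<Rightarrow> 'a::field"
  assumes "\<forall>n\<ge>d. coeff p n = 0"
  shows "\<exists>c. p = (\<Sum>k<d. smult (c k) (newt x k))"
  using assms
proof (induction d arbitrary: p)
  case 0
  then have "p = 0" by (intro poly_eqI) auto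
  then show ?case by simp
next
  case (Suc d)
  define a where "a = coeff p d"
  define p' where "p' = p - smult a (newt x d)"
  have "\<forall>n\<ge>d. coeff p' n = 0"
  proof (intro allI impI)
    fix n assume n: "d \<le> n"
    show "coeff p' n = 0"
    proof (cases "n = d")
      case True then show ?thesis by (simp add: p'_def a_def newt_deg)
    next
      case False
      then have "n > d" using n by simp
      then have "coeff (newt x d) n = 0" using newt_deg(1)[of x d] by (simp add: coeff_eq_0)
      then show ?thesis using Suc.prems \<open>n > d\<close> by (simp add: p'_def)
    qed
  qed
  then obtain c where c: "p' = (\<Sum>k<d. smult (c k) (newt x k))" using Suc.IH by blast
  have "p = p' + smult a (newt x d)" by (simp add: p'_def)
  also have "\<dots> = (\<Sum>k<d. smult ((c(d := a)) k) (newt x k)) + smult ((c(d := a)) d) (newt x d)"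
    using c by simp
  also have "\<dots> = (\<Sum>k<Suc d. smult ((c(d := a)) k) (newt x k))" by simp
  finally show ?case by blast
qed

lemma det_vandermonde_gen:
  fixes x :: "nat \<Rightarrow> 'a::field" and p :: "nat \<Rightarrow> 'a poly"
  assumes deg: "\<And>i. degree (p i) = i" and mon: "\<And>i. coeff (p i) i = 1"
  shows "det (mat l l (\<lambda>(i,j). poly (p i) (x j))) = (\<Prod>j<l. \<Prod>i<j. x j - x i)"
proof -
  have "\<forall>i. \<exists>c. p i - newt x i = (\<Sum>k<i. smult (c k) (newt x k))"
  proof
    fix i
    show "\<exists>c. p i - newt x i = (\<Sum>k<i. smult (c k) (newt x k))"
    proof (rule newt_span, intro allI impI)
      fix n assume n: "i \<le> n"
      show "coeff (p i - newt x i) n = 0"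
      proof (cases "n = i")
        case True then show ?thesis by (simp add: mon newt_deg)
      next
        case False
        then show ?thesis using n by (simp add: coeff_eq_0 deg newt_deg)
      qed
    qed
  qed
  then obtain C where C: "\<And>i. p i - newt x i = (\<Sum>k<i. smult (C i k) (newt x k))"
    by metis
  define L where "L = mat l l (\<lambda>(i,k). if k = i then 1 else if k < i then C i k else (0::'a))"
  define Q where "Q = mat l l (\<lambda>(i,j). poly (newt x i) (x j))"
  have pe: "poly (p i) y = poly (newt x i) y + (\<Sum>k<i. C i k * poly (newt x k) y)" for i y
  proof -
    have "p i = newt x i + (\<Sum>k<i. smult (C i k) (newt x k))" using C[of i] by (simp add: algebra_simps)
    then show ?thesis by (simp add: poly_sum)
  qed
  have LQ: "mat l l (\<lambda>(i,j). poly (p i) (x j)) = L * Q"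
  proof (rule eq_matI)
    fix i j assume i: "i < dim_row (L * Q)" and j: "j < dim_col (L * Q)"
    then have il: "i < l" and jl: "j < l" by (auto simp: L_def Q_def)
    have "(L * Q) $$ (i, j) = (\<Sum>k\<in>{0..<l}. L $$ (i,k) * Q $$ (k,j))"
      using il jl by (simp add: L_def Q_def scalar_prod_def)
    also have "\<dots> = (\<Sum>k\<in>{0..<l}. (if k = i then poly (newt x i) (x j) else 0)
                       + (if k < i then C i k * poly (newt x k) (x j) else 0))"
      using il jl by (intro sum.cong refl) (auto simp: L_def Q_def)
    also have "\<dots> = poly (newt x i) (x j) + (\<Sum>k\<in>{0..<l} \<inter> {..<i}. C i k * poly (newt x k) (x j))"
      using il by (simp add: sum.distrib sum.inter_restrict)
    also have "{0..<l} \<inter> {..<i} = {..<i}" using il by auto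
    finally show "mat l l (\<lambda>(i,j). poly (p i) (x j)) $$ (i, j) = (L * Q) $$ (i, j)"
      using il jl by (simp add: pe)
  next
    show "dim_row (mat l l (\<lambda>(i,j). poly (p i) (x j))) = dim_row (L * Q)" by (simp add: L_def)
    show "dim_col (mat l l (\<lambda>(i,j). poly (p i) (x j))) = dim_col (L * Q)" by (simp add: Q_def)
  qed
  have dL: "det L = 1"
    by (subst det_lower_triangular[of l]) (auto simp: L_def prod_list_diag_prod)
  have dQ: "det Q = (\<Prod>j<l. \<Prod>i<j. x j - x i)"
  proof (subst det_upper_triangular[of _ l])
    show "upper_triangular Q"
      unfolding upper_triangular_def Q_def by (auto simp: newt_poly)
  qed (auto simp: Q_def prod_list_diag_prod newt_poly atLeast0LessThan)
  have cL: "L \<in> carrier_mat l l" and cQ: "Q \<in> carrier_mat l l" by (auto simp: L_def Q_def)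
  show ?thesis unfolding LQ using det_mult[OF cL cQ] dL dQ by simp
qed



lemma ff_newt: "ff i y = poly (newt of_nat i) y"
  by (simp add: ff_def newt_poly)

lemma ff_mult: "ff i y * y = ff (Suc i) y + of_nat i * ff i y"
  by (simp add: ff_Suc algebra_simps)

definition cp :: "(nat \<Rightarrow> 'a::field_char_0) \<Rightarrow> nat \<Rightarrow> (nat \<Rightarrow> nat) \<Rightarrow> 'a" where
  "cp x l p = (\<Prod>i\<in>{0..<l}. ff i (x (p i)))"

lemma det_ff: "det (mat l l (\<lambda>(i,j). ff i (x j))) = (\<Prod>j<l. \<Prod>i<j. x j - x i)"
proof -
  have "det (mat l l (\<lambda>(i,j). ff i (x j))) = det (mat l l (\<lambda>(i,j). poly (newt of_nat i) (x j)))"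
    by (simp add: ff_newt)
  also have "\<dots> = (\<Prod>j<l. \<Prod>i<j. x j - x i)"
    by (rule det_vandermonde_gen) (auto simp: newt_deg)
  finally show ?thesis .
qed

lemma V_sum: "(\<Sum>p\<in>{p. p permutes {0..<l}}. signof p * cp x l p) = (\<Prod>j<l. \<Prod>i<j. x j - x i)"
  unfolding det_ff[symmetric] by (subst det_def'[of _ l]) (auto simp: cp_def intro!: sum.cong prod.cong)

lemma Y_small:
  assumes "Suc i < l"
  shows "(\<Sum>p\<in>{p. p permutes {0..<l}}. signof p * cp x l p * x (p i))
       = of_nat i * (\<Prod>j<l. \<Prod>i<j. x j - x i)"
proof -
  let ?S = "{p. p permutes {0..<l}}"
  define F' where "F' = mat l l (\<lambda>(r,j). if r = i then ff (Suc i) (x j) else ff r (x j))"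
  have il: "i < l" using assms by simp
  have "det F' = 0"
  proof (rule det_identical_rows[of F' l i "Suc i"])
    show "row F' i = row F' (Suc i)" using assms by (auto simp: F'_def)
  qed (use assms in \<open>auto simp: F'_def\<close>)
  moreover have "det F' = (\<Sum>p\<in>?S. signof p * (\<Prod>r\<in>{0..<l}. F' $$ (r, p r)))"
    by (rule det_def') (simp add: F'_def)
  ultimately have z: "(\<Sum>p\<in>?S. signof p * (\<Prod>r\<in>{0..<l}. F' $$ (r, p r))) = 0" by simp
  have e: "signof p * cp x l p * x (p i) = signof p * (\<Prod>r\<in>{0..<l}. F' $$ (r, p r)) + of_nat i * (signof p * cp x l p)"
    if p: "p permutes {0..<l}" for p
  proof -
    have pr: "p r < l" if "r < l" for r using p that by (simp add: permutes_in_image)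
    define R where "R = (\<Prod>r\<in>{0..<l} - {i}. ff r (x (p r)))"
    have c1: "cp x l p = ff i (x (p i)) * R"
      unfolding cp_def R_def using il by (subst prod.remove[where x=i]) auto
    have "(\<Prod>r\<in>{0..<l}. F' $$ (r, p r)) = F' $$ (i, p i) * (\<Prod>r\<in>{0..<l} - {i}. F' $$ (r, p r))"
      using il by (subst prod.remove[where x=i]) auto
    also have "(\<Prod>r\<in>{0..<l} - {i}. F' $$ (r, p r)) = R"
      unfolding R_def by (intro prod.cong refl) (auto simp: F'_def pr)
    also have "F' $$ (i, p i) = ff (Suc i) (x (p i))" using il pr[OF il] by (simp add: F'_def)
    finally have c2: "(\<Prod>r\<in>{0..<l}. F' $$ (r, p r)) = ff (Suc i) (x (p i)) * R" .
    show ?thesis unfolding c1 c2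
      using ff_mult[of i "x (p i)"] by (simp add: algebra_simps)
  qed
  have "(\<Sum>p\<in>?S. signof p * cp x l p * x (p i))
      = (\<Sum>p\<in>?S. signof p * (\<Prod>r\<in>{0..<l}. F' $$ (r, p r))) + of_nat i * (\<Sum>p\<in>?S. signof p * cp x l p)"
    by (simp add: e sum.distrib sum_distrib_left)
  then show ?thesis using z V_sum[where l=l and x=x] by simp
qed

lemma Y_total:
  "(\<Sum>i\<in>{0..<l}. \<Sum>p\<in>{p. p permutes {0..<l}}. signof p * cp x l p * x (p i))
     = (\<Prod>j<l. \<Prod>i<j. x j - x i) * (\<Sum>j\<in>{0..<l}. x j)"
proof -
  let ?S = "{p. p permutes {0..<l}}"
  have "(\<Sum>i\<in>{0..<l}. \<Sum>p\<in>?S. signof p * cp x l p * x (p i))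
      = (\<Sum>p\<in>?S. signof p * cp x l p * (\<Sum>i\<in>{0..<l}. x (p i)))"
    by (subst sum.swap) (simp add: sum_distrib_left)
  also have "\<dots> = (\<Sum>p\<in>?S. signof p * cp x l p * (\<Sum>j\<in>{0..<l}. x j))"
  proof (intro sum.cong refl)
    fix p assume "p \<in> ?S"
    then have "(\<Sum>j\<in>{0..<l}. x j) = (\<Sum>i\<in>{0..<l}. x (p i))"
      using sum.permute[of p "{0..<l}" x] by (simp add: comp_def)
    then show "signof p * cp x l p * (\<Sum>i\<in>{0..<l}. x (p i)) = signof p * cp x l p * (\<Sum>j\<in>{0..<l}. x j)"
      by simp
  qed
  also have "\<dots> = (\<Sum>p\<in>?S. signof p * cp x l p) * (\<Sum>j\<in>{0..<l}. x j)"
    by (simp add: sum_distrib_right)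
  finally show ?thesis unfolding V_sum .
qed



lemma iY_sum:
  "(\<Sum>i\<in>{0..<l}. of_nat i * (\<Sum>p\<in>{p. p permutes {0..<l}}. signof p * cp x l p * x (p i)))
   = (\<Prod>j<l. \<Prod>i<j. x j - x i) * ((\<Sum>i\<in>{0..<l-1}. (of_nat i)^2)
        + of_nat (l-1) * ((\<Sum>j\<in>{0..<l}. x j) - (\<Sum>i\<in>{0..<l-1}. of_nat i)))"
proof (cases l)
  case 0 then show ?thesis by simp
next
  case (Suc d)
  let ?S = "{p. p permutes {0..<l}}"
  let ?V = "(\<Prod>j<l. \<Prod>i<j. x j - x i)"
  let ?Y = "\<lambda>i. (\<Sum>p\<in>?S. signof p * cp x l p * x (p i))"
  have ys: "?Y i = of_nat i * ?V" if "i < d" for i using Y_small[where i=i and l=l and x=x] that Suc by simp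
  have tot: "(\<Sum>i\<in>{0..<d}. ?Y i) + ?Y d = ?V * (\<Sum>j\<in>{0..<l}. x j)"
    using Y_total[where l=l and x=x] Suc by simp
  have ysum: "(\<Sum>i\<in>{0..<d}. ?Y i) = (\<Sum>i\<in>{0..<d}. of_nat i * ?V)"
    by (rule sum.cong) (auto simp: ys)
  have ysum2: "(\<Sum>i\<in>{0..<d}. of_nat i * ?Y i) = (\<Sum>i\<in>{0..<d}. of_nat i * (of_nat i * ?V))"
    by (rule sum.cong) (auto simp: ys)
  have yd: "?Y d = ?V * (\<Sum>j\<in>{0..<l}. x j) - ?V * (\<Sum>i\<in>{0..<d}. of_nat i)"
    using tot unfolding ysum by (simp add: sum_distrib_right sum_distrib_left algebra_simps)
  have "(\<Sum>i\<in>{0..<l}. of_nat i * ?Y i) = (\<Sum>i\<in>{0..<d}. of_nat i * ?Y i) + of_nat d * ?Y d"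
    using Suc by simp
  also have "(\<Sum>i\<in>{0..<d}. of_nat i * ?Y i) = ?V * (\<Sum>i\<in>{0..<d}. (of_nat i)^2)"
    unfolding ysum2 by (simp add: sum_distrib_right power2_eq_square mult_ac)
  finally have fin: "(\<Sum>i\<in>{0..<l}. of_nat i * ?Y i) = ?V * (\<Sum>i\<in>{0..<d}. (of_nat i)^2) + of_nat d * ?Y d" .
  have ld: "l - 1 = d" using Suc by simp
  show ?thesis unfolding fin yd ld by (simp add: algebra_simps)
qed

lemma T_sum:
  "(\<Sum>p\<in>{p. p permutes {0..<l}}. signof p * cp x l p *
      (\<Sum>i\<in>{0..<l}. x (p i) * (x (p i) - 1) / 2 - of_nat i * x (p i) + of_nat i * (of_nat i + 1) / 2))
   = (\<Prod>j<l. \<Prod>i<j. x j - x i) * ((\<Sum>j\<in>{0..<l}. x j * (x j - 1) / 2) + (\<Sum>i\<in>{0..<l}. of_nat i * (of_nat i + 1) / 2)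
        - (\<Sum>i\<in>{0..<l-1}. (of_nat i)^2)
        - of_nat (l-1) * ((\<Sum>j\<in>{0..<l}. x j) - (\<Sum>i\<in>{0..<l-1}. of_nat i)))"
proof -
  let ?S = "{p. p permutes {0..<l}}"
  let ?V = "(\<Prod>j<l. \<Prod>i<j. x j - x i)"
  let ?G = "(\<Sum>j\<in>{0..<l}. x j * (x j - 1) / 2)"
  let ?C = "(\<Sum>i\<in>{0..<l}. of_nat i * (of_nat i + 1) / 2 :: 'a)"
  have inner: "(\<Sum>i\<in>{0..<l}. x (p i) * (x (p i) - 1) / 2 - of_nat i * x (p i) + of_nat i * (of_nat i + 1) / 2)
      = ?G + ?C - (\<Sum>i\<in>{0..<l}. of_nat i * x (p i))" if "p \<in> ?S" for p
  proof -
    have "?G = (\<Sum>i\<in>{0..<l}. x (p i) * (x (p i) - 1) / 2)"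
      using that sum.permute[of p "{0..<l}" "\<lambda>j. x j * (x j - 1) / 2"] by (simp add: comp_def)
    then show ?thesis by (simp add: sum.distrib sum_subtractf)
  qed
  have "(\<Sum>p\<in>?S. signof p * cp x l p *
      (\<Sum>i\<in>{0..<l}. x (p i) * (x (p i) - 1) / 2 - of_nat i * x (p i) + of_nat i * (of_nat i + 1) / 2))
    = (\<Sum>p\<in>?S. signof p * cp x l p * (?G + ?C) - (\<Sum>i\<in>{0..<l}. of_nat i * (signof p * cp x l p * x (p i))))"
  proof (intro sum.cong refl)
    fix p assume "p \<in> ?S"
    show "signof p * cp x l p * (\<Sum>i\<in>{0..<l}. x (p i) * (x (p i) - 1) / 2 - of_nat i * x (p i) + of_nat i * (of_nat i + 1) / 2)
      = signof p * cp x l p * (?G + ?C) - (\<Sum>i\<in>{0..<l}. of_nat i * (signof p * cp x l p * x (p i)))"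
      unfolding inner[OF \<open>p \<in> ?S\<close>] by (simp add: right_diff_distrib sum_distrib_left mult_ac)
  qed
  also have "\<dots> = (\<Sum>p\<in>?S. signof p * cp x l p) * (?G + ?C)
      - (\<Sum>i\<in>{0..<l}. of_nat i * (\<Sum>p\<in>?S. signof p * cp x l p * x (p i)))"
    by (simp add: sum_subtractf sum_distrib_right sum_distrib_left sum.swap[where A = ?S])
  also have "\<dots> = ?V * (?G + ?C) - ?V * ((\<Sum>i\<in>{0..<l-1}. (of_nat i)^2)
        + of_nat (l-1) * ((\<Sum>j\<in>{0..<l}. x j) - (\<Sum>i\<in>{0..<l-1}. of_nat i)))"
    unfolding V_sum iY_sum ..
  finally show ?thesis by (simp add: algebra_simps)
qed



lemma sum_id_closed: "(\<Sum>i\<in>{0..<n}. of_nat i :: 'a::field_char_0) = of_nat n * (of_nat n - 1) / 2"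
  by (induction n) (simp_all add: field_simps)

lemma sum_sq_closed: "(\<Sum>i\<in>{0..<n}. (of_nat i)^2 :: 'a::field_char_0) = (of_nat n - 1) * of_nat n * (2 * of_nat n - 1) / 6"
  by (induction n) (simp_all add: field_simps power2_eq_square)

lemma sum_tri_closed: "(\<Sum>i\<in>{0..<n}. of_nat i * (of_nat i + 1) / 2 :: 'a::field_char_0) = (of_nat n - 1) * of_nat n * (of_nat n + 1) / 6"
proof (induction n)
  case 0 then show ?case by simp
next
  case (Suc n)
  show ?case unfolding sum.atLeast0_lessThan_Suc Suc.IH by (simp add: field_simps)
qed

lemma inner_content: "of_int (\<Sum>j<m. int j - int i) = (of_nat m * (of_nat m - 1) / 2 - of_nat i * of_nat m :: 'a::field_char_0)"
  by (induction m) (simp_all add: field_simps)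

lemma content_formula:
  fixes lam :: "nat list"
  defines "l \<equiv> length lam"
  defines "x \<equiv> (\<lambda>j. of_nat (degvec lam j) :: 'a::field_char_0)"
  shows "of_int (content lam) = (\<Sum>j\<in>{0..<l}. x j * (x j - 1) / 2) + (\<Sum>i\<in>{0..<l}. of_nat i * (of_nat i + 1) / 2)
        - (\<Sum>i\<in>{0..<l-1}. (of_nat i)^2)
        - of_nat (l-1) * ((\<Sum>j\<in>{0..<l}. x j) - (\<Sum>i\<in>{0..<l-1}. of_nat i))"
proof -
  define d where "d = l - 1"
  define L where "L = (\<lambda>i. of_nat (lam ! i) :: 'a)"
  have xi: "x i = L i + of_nat d - of_nat i" if "i < l" for i
    using that unfolding x_def L_def d_def degvec_def l_def[symmetric] by (simp add: of_nat_diff)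
  have "(of_int (content lam) :: 'a) = (\<Sum>i<l. of_int (\<Sum>j<lam ! i. int j - int i))"
    unfolding content_def l_def[symmetric] of_int_sum ..
  also have "\<dots> = (\<Sum>i\<in>{0..<l}. L i * (L i - 1) / 2 - of_nat i * L i)"
    unfolding atLeast0LessThan L_def by (intro sum.cong refl) (simp only: inner_content)
  also have "\<dots> = (\<Sum>i\<in>{0..<l}. x i * (x i - 1) / 2 - of_nat d * x i + of_nat d * (of_nat d + 1) / 2 - of_nat i * (of_nat i + 1) / 2)"
    by (intro sum.cong refl) (simp add: xi field_simps)
  also have "\<dots> = (\<Sum>i\<in>{0..<l}. x i * (x i - 1) / 2) - of_nat d * (\<Sum>i\<in>{0..<l}. x i)
      + of_nat l * (of_nat d * (of_nat d + 1) / 2) - (\<Sum>i\<in>{0..<l}. of_nat i * (of_nat i + 1) / 2)"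
    by (simp add: sum.distrib sum_subtractf sum_distrib_left)
  also have "\<dots> = (\<Sum>j\<in>{0..<l}. x j * (x j - 1) / 2) + (\<Sum>i\<in>{0..<l}. of_nat i * (of_nat i + 1) / 2)
        - (\<Sum>i\<in>{0..<d}. (of_nat i)^2)
        - of_nat d * ((\<Sum>j\<in>{0..<l}. x j) - (\<Sum>i\<in>{0..<d}. of_nat i))"
  proof (cases l)
    case 0 then show ?thesis by (simp add: d_def)
  next
    case (Suc e)
    then have "d = e" by (simp add: d_def)
    then show ?thesis unfolding Suc sum_id_closed sum_sq_closed sum_tri_closed
      by (simp add: field_simps)
  qed
  finally show ?thesis unfolding d_def .
qed



lemma ff_nat_zero: "n < i \<Longrightarrow> ff i (of_nat n :: 'a::field_char_0) = 0"
  unfolding ff_def by (intro prod_zero) (auto intro!: bexI[of _ n])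

lemma h2_diff: "i \<le> n \<Longrightarrow> (h2 (n - i) :: 'a::field_char_0) =
   of_nat n * (of_nat n - 1) / 2 - of_nat i * of_nat n + of_nat i * (of_nat i + 1) / 2"
  unfolding h2_def by (simp add: of_nat_diff field_simps)

lemma signof_smult: "(of_int k :: 'a::field poly) * smult c P = smult (of_int k * c) P"
  by (simp add: of_int_poly mult.commute)

lemma sum_rev_nat: "(\<Sum>j\<in>{0..<l}. l - 1 - j) = (\<Sum>j\<in>{0..<l}. (j::nat))"
proof (induction l)
  case 0 then show ?case by simp
next
  case (Suc l)
  have "(\<Sum>j\<in>{0..<Suc l}. Suc l - 1 - j) = (\<Sum>j\<in>{0..<l}. l - j)" by simp
  also have "\<dots> = (\<Sum>j\<in>{0..<l}. Suc (l - 1 - j))" by (intro sum.cong) auto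
  also have "\<dots> = (\<Sum>j\<in>{0..<l}. l - 1 - j) + l" by (simp only: Suc_eq_plus1 sum.distrib) simp
  finally show ?case using Suc by simp
qed



theorem propositionA2:
  fixes A :: "nat \<Rightarrow> 'a::field_char_0 poly" and lam :: "nat list"
  assumes "appell A" and "is_partition lam"
  defines "n \<equiv> sum_list lam"
      and "z \<equiv> (\<lambda>j. poly (A j) 0)"
  shows "coeff (wronskian_appell A lam) n = 1
    \<and> (n \<ge> 1 \<longrightarrow> coeff (wronskian_appell A lam) (n - 1) = of_nat n * z 1)
    \<and> (n \<ge> 2 \<longrightarrow> coeff (wronskian_appell A lam) (n - 2)
          = of_int (content lam) * (z 2 - (z 1)\<^sup>2) + of_nat (n choose 2) * (z 1)\<^sup>2)"
proof -
  define l where "l = length lam"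
  define nn where "nn = degvec lam"
  define x where "x = (\<lambda>j. of_nat (nn j) :: 'a)"
  define S where "S = {p. p permutes {0..<l}}"
  define V where "V = (\<Prod>j<l. \<Prod>i<j. x j - x i)"
  define M where "M = mat l l (\<lambda>(i, j). (pderiv ^^ i) (A (nn j)))"
  define Pp where "Pp = (\<lambda>p. \<Prod>i\<in>{0..<l}. A (nn (p i) - i))"
  define T where "T = (\<lambda>p. (\<Sum>i\<in>{0..<l}. x (p i) * (x (p i) - 1) / 2 - of_nat i * x (p i) + of_nat i * (of_nat i + 1) / 2))"
  have Vd: "(\<Prod>j<l. \<Prod>i<j. (of_int (int (nn j) - int (nn i)) :: 'a)) = V"
    unfolding V_def x_def by simp
  have nn_dec: "nn j < nn i" if "i < j" "j < l" for i j
  proof -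
    have "lam ! j \<le> lam ! i" using assms(2) that unfolding is_partition_def l_def
      by (simp add: sorted_wrt_iff_nth_less)
    then show ?thesis using that unfolding nn_def degvec_def l_def by simp
  qed
  have Vnz: "V \<noteq> 0"
    unfolding V_def x_def by (auto simp: prod_zero_iff) (metis nn_dec less_irrefl)
  have W: "wronskian_appell A lam = smult (inverse V) (det M)"
    unfolding wronskian_appell_def wronskian_def Let_def l_def[symmetric] nn_def[symmetric] Vd M_def ..
  have pl: "p i < l" if "p \<in> S" "i < l" for p i
    using that by (simp add: S_def permutes_in_image)
  have detM: "det M = (\<Sum>p\<in>S. smult (signof p * cp x l p) (Pp p))"
  proof -
    have "det M = (\<Sum>p\<in>S. signof p * (\<Prod>i\<in>{0..<l}. M $$ (i, p i)))"
      unfolding S_def by (rule det_def') (simp add: M_def)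
    also have "\<dots> = (\<Sum>p\<in>S. smult (signof p * cp x l p) (Pp p))"
    proof (intro sum.cong refl)
      fix p assume p: "p \<in> S"
      have "(\<Prod>i\<in>{0..<l}. M $$ (i, p i)) = (\<Prod>i\<in>{0..<l}. smult (ff i (x (p i))) (A (nn (p i) - i)))"
        by (intro prod.cong refl) (simp add: M_def pl[OF p] appell_pderiv_pow[OF assms(1)] x_def)
      also have "\<dots> = smult (cp x l p) (Pp p)"
        unfolding prod_smult cp_def Pp_def ..
      finally have e: "(\<Prod>i\<in>{0..<l}. M $$ (i, p i)) = smult (cp x l p) (Pp p)" .
      show "signof p * (\<Prod>i\<in>{0..<l}. M $$ (i, p i)) = smult (signof p * cp x l p) (Pp p)"
        unfolding e by (rule signof_smult)
    qed
    finally show ?thesis .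
  qed
  have key: "coeff (smult (signof p * cp x l p) (Pp p)) (n - k)
     = signof p * cp x l p * (if k = 0 then 1 else if k = 1 then of_nat n * z 1
         else z 2 * T p + (z 1)^2 * (h2 n - T p))"
    if p: "p \<in> S" and k: "k \<le> 2" "k \<le> n" for p k
  proof (cases "cp x l p = 0")
    case True
    then show ?thesis by simp
  next
    case False
    have le: "i \<le> nn (p i)" if "i < l" for i
    proof (rule ccontr)
      assume "\<not> i \<le> nn (p i)"
      then have "ff i (x (p i)) = 0" unfolding x_def by (intro ff_nat_zero) simp
      then have "cp x l p = 0" unfolding cp_def using that by (intro prod_zero) auto
      then show False using False by simp
    qed
    define m where "m = (\<lambda>i. nn (p i) - i)"
    have nsum: "(\<Sum>j\<in>{0..<l}. nn j) = n + (\<Sum>j\<in>{0..<l}. j)"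
    proof -
      have "(\<Sum>j\<in>{0..<l}. nn j) = (\<Sum>j\<in>{0..<l}. lam ! j + (l - 1 - j))"
        by (intro sum.cong refl) (auto simp: nn_def degvec_def l_def)
      also have "\<dots> = n + (\<Sum>j\<in>{0..<l}. j)"
        unfolding sum.distrib sum_rev_nat n_def sum_list_sum_nth l_def ..
      finally show ?thesis .
    qed
    have "sum m {0..<l} + (\<Sum>i\<in>{0..<l}. i) = (\<Sum>i\<in>{0..<l}. nn (p i))"
      unfolding m_def sum.distrib[symmetric] by (intro sum.cong refl) (simp add: le)
    also have "\<dots> = (\<Sum>j\<in>{0..<l}. nn j)"
      using sum.permute[of p "{0..<l}" nn] p by (simp add: S_def comp_def)
    finally have ms: "sum m {0..<l} = n" using nsum by simp
    have Tm: "(\<Sum>i\<in>{0..<l}. h2 (m i)) = T p"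
      unfolding T_def m_def x_def by (intro sum.cong refl) (simp add: h2_diff le)
    have "coeff (smult (signof p * cp x l p) (Pp p)) (n - k) = signof p * cp x l p * coeff (Pp p) (sum m {0..<l} - k)"
      by (simp add: ms)
    also have "coeff (Pp p) (sum m {0..<l} - k) = coeff (\<Prod>i\<in>{0..<l}. reflect_poly (A (m i))) k"
    proof -
      have "Pp p = (\<Prod>i\<in>{0..<l}. A (m i))" by (simp add: Pp_def m_def)
      then show ?thesis by (simp only:) (rule prod_appell_coeffs[OF assms(1)], use k ms in auto)
    qed
    finally show ?thesis
      using prod_reflect_coeffs[OF assms(1), of "{0..<l}" m] k unfolding ms Tm z_def
      by (auto simp: numeral_2_eq_2 le_Suc_eq)
  qed
  have cW: "coeff (wronskian_appell A lam) (n - k) = (if k = 0 then 1 else if k = 1 then of_nat n * z 1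
         else (z 2 - (z 1)^2) * (\<Sum>p\<in>S. signof p * cp x l p * T p) * inverse V + (z 1)^2 * h2 n)"
    if k: "k \<le> 2" "k \<le> n" for k
  proof -
    have V': "(\<Sum>p\<in>S. signof p * cp x l p) = V" unfolding S_def V_def by (rule V_sum)
    have "coeff (wronskian_appell A lam) (n - k) = inverse V * (\<Sum>p\<in>S. signof p * cp x l p * (if k = 0 then 1 else if k = 1 then of_nat n * z 1
         else z 2 * T p + (z 1)^2 * (h2 n - T p)))"
    proof -
      have ss: "(\<Sum>p\<in>S. signof p * cp x l p * coeff (Pp p) (n - k)) = (\<Sum>p\<in>S. signof p * cp x l p * (if k = 0 then 1 else if k = 1 then of_nat n * z 1
         else z 2 * T p + (z 1)^2 * (h2 n - T p)))"
        using k by (intro sum.cong refl key[unfolded coeff_smult]) auto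
      show ?thesis unfolding W coeff_smult detM coeff_sum ss ..
    qed
    also have "\<dots> = (if k = 0 then 1 else if k = 1 then of_nat n * z 1
         else (z 2 - (z 1)^2) * (\<Sum>p\<in>S. signof p * cp x l p * T p) * inverse V + (z 1)^2 * h2 n)"
    proof -
      have s2: "(\<Sum>p\<in>S. signof p * cp x l p * (z 2 * T p + (z 1)^2 * (h2 n - T p)))
          = (z 2 - (z 1)^2) * (\<Sum>p\<in>S. signof p * cp x l p * T p) + (z 1)^2 * h2 n * (\<Sum>p\<in>S. signof p * cp x l p)"
        by (simp add: sum_distrib_left sum_distrib_right sum.distrib algebra_simps sum_subtractf)
      have A0: "(\<Sum>p\<in>S. signof p * cp x l p * (1::'a)) = V" using V' by simp
      have A1: "(\<Sum>p\<in>S. signof p * cp x l p * (of_nat n * z 1)) = V * (of_nat n * z 1)"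
        by (simp only: sum_distrib_right[symmetric] V')
      have "k = 0 \<or> k = 1 \<or> k = 2" using k by auto
      then show ?thesis
      proof (elim disjE)
        assume "k = 0" then show ?thesis using A0 Vnz by simp
      next
        assume "k = 1" then show ?thesis using A1 Vnz by simp
      next
        assume k2: "k = 2"
        have "inverse V * (\<Sum>p\<in>S. signof p * cp x l p * (if k = 0 then 1 else if k = 1 then of_nat n * z 1
         else z 2 * T p + (z 1)^2 * (h2 n - T p)))
          = inverse V * (\<Sum>p\<in>S. signof p * cp x l p * (z 2 * T p + (z 1)^2 * (h2 n - T p)))"
          using k2 by simp
        also have "\<dots> = inverse V * ((z 2 - (z 1)^2) * (\<Sum>p\<in>S. signof p * cp x l p * T p) + (z 1)^2 * h2 n * V)"
          unfolding s2 V' ..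
        also have "\<dots> = (z 2 - (z 1)^2) * (\<Sum>p\<in>S. signof p * cp x l p * T p) * inverse V + (z 1)^2 * h2 n"
          using Vnz by (simp add: field_simps)
        finally show ?thesis using k2 by simp
      qed
    qed
    finally show ?thesis .
  qed
  have cT: "(\<Sum>p\<in>S. signof p * cp x l p * T p) = V * of_int (content lam)"
  proof -
    have "(\<Sum>p\<in>S. signof p * cp x l p * T p) = V * ((\<Sum>j\<in>{0..<l}. x j * (x j - 1) / 2) + (\<Sum>i\<in>{0..<l}. of_nat i * (of_nat i + 1) / 2)
        - (\<Sum>i\<in>{0..<l-1}. (of_nat i)^2)
        - of_nat (l-1) * ((\<Sum>j\<in>{0..<l}. x j) - (\<Sum>i\<in>{0..<l-1}. of_nat i)))"
      unfolding S_def T_def V_def by (rule T_sum)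
    also have "(\<Sum>j\<in>{0..<l}. x j * (x j - 1) / 2) + (\<Sum>i\<in>{0..<l}. of_nat i * (of_nat i + 1) / 2)
        - (\<Sum>i\<in>{0..<l-1}. (of_nat i)^2)
        - of_nat (l-1) * ((\<Sum>j\<in>{0..<l}. x j) - (\<Sum>i\<in>{0..<l-1}. of_nat i)) = of_int (content lam)"
      unfolding x_def nn_def l_def by (rule content_formula[symmetric])
    finally show ?thesis .
  qed
  have e2: "coeff (wronskian_appell A lam) (n - 2) = of_int (content lam) * (z 2 - (z 1)\<^sup>2) + of_nat (n choose 2) * (z 1)\<^sup>2"
    if "n \<ge> 2"
  proof -
    have "coeff (wronskian_appell A lam) (n - 2) = (z 2 - (z 1)^2) * (V * of_int (content lam)) * inverse V + (z 1)^2 * h2 n"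
      using cW[of 2] that unfolding cT by simp
    also have "\<dots> = of_int (content lam) * (z 2 - (z 1)\<^sup>2) + (z 1)^2 * h2 n"
      using Vnz by (simp add: field_simps)
    finally show ?thesis by (simp add: choose2_field h2_def mult.commute)
  qed
  show ?thesis
    using cW[of 0] cW[of 1] e2 by auto
qed

end
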